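(* In Setting U, let $(\pi_i)$ be a positive numerical steady state, and suppose there is a constant $C_P>0$ such that for every real vector $(u_i)$ with $\sum_iu_i\pi_i|C_i|=0$, $$\sum_iu_i^2\pi_i|C_i|\le C_P\sum_{i,j}\frac{|\Gamma_{ij}|(\pi_i+\pi_j)}{|\mathbf y_i-\mathbf y_j|}(u_i-u_j)^2 .$$ Let $\rho(t)$ solve the upwind scheme with $\sum_i\rho_i(0)|C_i|=\sum_i\pi_i|C_i|$. Then for all $t\ge0$, $$\sum_i\frac{(\rho_i(t)-\pi_i)^2}{\pi_i}|C_i|\le e^{-\frac{D}{2C_P}t}\sum_i\frac{(\rho_i(0)-\pi_i)^2}{\pi_i}|C_i| .$$
   Context: Setting U: Let $\mathcal N\subset\mathbb R^\ell$ be a smooth compact connected $d$-dimensional submanifold without boundary, with geodesic distance $d_{\mathcal N}$. Let $\mathbf y_1,\dots,\mathbf y_n\in\mathcal N$ be distinct points with Voronoi cells $C_i:=\{\mathbf y\in\mathcal N: d_{\mathcal N}(\mathbf y,\mathbf y_i)\le d_{\mathcal N}(\mathbf y,\mathbf y_j)\ \forall j\}$, volumes $|C_i|:=\mathcal H^d(C_i)>0$, faces $\Gamma_{ij}:=C_i\cap C_j$ with $|\Gamma_{ij}|:=\mathcal H^{d-1}(\Gamma_{ij})$ ($|\Gamma_{ii}|:=0$), and neighbor sets $VF(i):=\{j\ne i:\Gamma_{ij}\ne\emptyset\}$; assume $|\Gamma_{ij}|>0$ for $j\in VF(i)$ and that the graph with edges $\{i,j\}$, $j\in VF(i)$, is connected.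 $|\mathbf y_j-\mathbf y_i|$ is the Euclidean distance in $\mathbb R^\ell$. Let $D>0$ be a constant and $\vec b$ a smooth tangent vector field on $\mathcal N$. For $j\in VF(i)$, $\vec n_{ij}$ is the unit normal to $\Gamma_{ij}$ (tangent to $\mathcal N$) pointing from $C_i$ into $C_j$, and $(\vec b\cdot\vec n)_{ij}$ is the value of $\vec b\cdot\vec n_{ij}$ at the point where the minimizing geodesic from $\mathbf y_i$ to $\mathbf y_j$ meets $\Gamma_{ij}$, so that $(\vec b\cdot\vec n)_{ji}=-(\vec b\cdot\vec n)_{ij}$. For real $x$, $x^+:=\max(x,0)$, $x^-:=\max(-x,0)$. Define $Q_{ij}:=\frac{|\Gamma_{ij}|}{|C_i|}\big(\frac{D}{|\mathbf y_j-\mathbf y_i|}+(\vec b\cdot\vec n)^+_{ij}\big)$ for $j\in VF(i)$, $Q_{ij}:=0$ for $j\notin VF(i)\cup\{i\}$, and $Q_{ii}:=-\sum_{j\ne i}Q_{ij}$. The upwind scheme is the ODE system $\frac{\mathrm d}{\mathrm dt}(\rho_i|C_i|)=\sum_{j\in VF(i)}|\Gamma_{ij}|\big(\frac{D(\rho_j-\rho_i)}{|\mathbf y_j-\mathbf y_i|}+(\vec b\cdot\vec n)^-_{ij}\rho_j-(\vec b\cdot\vec n)^+_{ij}\rho_i\big)$, $i=1,\dots,n$, equivalently $\frac{\mathrm d}{\mathrm dt}(\rho_i|C_i|)=\sum_jQ_{ji}\rho_j|C_j|$. A numerical steady state is a vector $(\pi_i)$ with $\sum_jQ_{ji}\pi_j|C_j|=0$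 for all $i$. *)

theory Defs
  imports "HOL-Analysis.Analysis"
begin

text \<open>Cells are indexed by 0..<n.  vol i = |C_i|, face i j = |Gamma_ij|,
  y i = generating point in R^l, bn i j = (b . n)_ij.\<close>

definition pospart :: "real \<Rightarrow> real" where "pospart x = max x 0"
definition negpart :: "real \<Rightarrow> real" where "negpart x = max (- x) 0"

text \<open>Voronoi neighbours: VF(i) = {j \<noteq> i. Gamma_ij nonempty}; by the standing
  assumption |Gamma_ij| > 0 exactly for neighbours and Gamma_ij is empty (measure 0) otherwise.\<close>
definition VF :: "nat \<Rightarrow> (nat \<Rightarrow> nat \<Rightarrow> real) \<Rightarrow> nat \<Rightarrow> nat set" where
  "VF n face i = {j. j < n \<and> j \<noteq> i \<and> 0 < face i j}"

definition Qrate :: "nat \<Rightarrow> (nat \<Rightarrow> real) \<Rightarrow> (nat \<Rightarrow> nat \<Rightarrow> real) \<Rightarrow> (nat \<Rightarrow> 'a::real_normed_vector)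
    \<Rightarrow> (nat \<Rightarrow> nat \<Rightarrow> real) \<Rightarrow> real \<Rightarrow> nat \<Rightarrow> nat \<Rightarrow> real" where
  "Qrate n vol face y bn D i j =
     (if j \<in> VF n face i then face i j / vol i * (D / norm (y j - y i) + pospart (bn i j))
      else if j = i then - (\<Sum>k\<in>VF n face i. face i k / vol i * (D / norm (y k - y i) + pospart (bn i k)))
      else 0)"

text \<open>Right-hand side of the upwind scheme for d/dt (rho_i |C_i|).\<close>
definition upwind_rhs :: "nat \<Rightarrow> (nat \<Rightarrow> real) \<Rightarrow> (nat \<Rightarrow> nat \<Rightarrow> real) \<Rightarrow> (nat \<Rightarrow> 'a::real_normed_vector)
    \<Rightarrow> (nat \<Rightarrow> nat \<Rightarrow> real) \<Rightarrow> real \<Rightarrow> (nat \<Rightarrow> real) \<Rightarrow> nat \<Rightarrow> real" where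
  "upwind_rhs n vol face y bn D rho i =
     (\<Sum>j\<in>VF n face i. face i j * (D * (rho j - rho i) / norm (y j - y i)
        + negpart (bn i j) * rho j - pospart (bn i j) * rho i))"

definition numerical_steady_state where
  "numerical_steady_state n vol face y bn D pst \<longleftrightarrow>
     (\<forall>i<n. (\<Sum>j<n. Qrate n vol face y bn D j i * pst j * vol j) = 0)"

end

theory Submission
  imports Defs
begin

lemma markov_identity:
  fixes c :: "nat \<Rightarrow> nat \<Rightarrow> real" and p v :: "nat \<Rightarrow> real"
  assumes stat: "\<And>i. i < n \<Longrightarrow> (\<Sum>j<n. c j i * p j - c i j * p i) = 0"
  shows "2 * (\<Sum>i<n. v i * (\<Sum>j<n. c j i * p j * v j - c i j * p i * v i))
       = - (\<Sum>i<n. \<Sum>j<n. c i j * p i * (v i - v j)^2)"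
proof -
  have st: "(\<Sum>j<n. c j i * p j) = (\<Sum>j<n. c i j * p i)" if "i < n" for i
    using stat[OF that] by (simp add: sum_subtractf)
  have A: "(\<Sum>i<n. \<Sum>j<n. c i j * p i * (v j)^2) = (\<Sum>i<n. \<Sum>j<n. c i j * p i * (v i)^2)"
  proof -
    have "(\<Sum>i<n. \<Sum>j<n. c i j * p i * (v j)^2) = (\<Sum>j<n. \<Sum>i<n. c i j * p i * (v j)^2)"
      by (rule sum.swap)
    also have "\<dots> = (\<Sum>j<n. (v j)^2 * (\<Sum>i<n. c i j * p i))"
      by (simp add: sum_distrib_left mult_ac)
    also have "\<dots> = (\<Sum>j<n. (v j)^2 * (\<Sum>i<n. c j i * p j))"
      using st by simp
    also have "\<dots> = (\<Sum>i<n. \<Sum>j<n. c i j * p i * (v i)^2)"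
      by (simp add: sum_distrib_left mult_ac)
    finally show ?thesis .
  qed
  have B: "(\<Sum>i<n. \<Sum>j<n. c j i * p j * v j * v i) = (\<Sum>i<n. \<Sum>j<n. c i j * p i * v i * v j)"
    by (subst sum.swap) (simp add: mult_ac)
  have L: "2 * (\<Sum>i<n. v i * (\<Sum>j<n. c j i * p j * v j - c i j * p i * v i))
     = 2 * (\<Sum>i<n. \<Sum>j<n. c j i * p j * v j * v i) - 2 * (\<Sum>i<n. \<Sum>j<n. c i j * p i * (v i)^2)"
    by (simp add: sum_distrib_left sum_subtractf algebra_simps power2_eq_square)
  have R: "(\<Sum>i<n. \<Sum>j<n. c i j * p i * (v i - v j)^2)
     = (\<Sum>i<n. \<Sum>j<n. c i j * p i * (v i)^2) + (\<Sum>i<n. \<Sum>j<n. c i j * p i * (v j)^2)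
       - 2 * (\<Sum>i<n. \<Sum>j<n. c i j * p i * v i * v j)"
    by (simp add: sum_distrib_left sum_subtractf sum.distrib algebra_simps power2_eq_square)
  show ?thesis using L R A B by linarith
qed

lemma decr_lemma:
  fixes f f' :: "real \<Rightarrow> real"
  assumes d: "\<And>t. t \<ge> 0 \<Longrightarrow> (f has_real_derivative f' t) (at t within {0..})"
    and nonpos: "\<And>t. t \<ge> 0 \<Longrightarrow> f' t \<le> 0"
    and t: "t \<ge> 0"
  shows "f t \<le> f 0"
proof (rule DERIV_nonpos_imp_decreasing_open[OF t])
  fix x :: real assume x: "0 < x" "x < t"
  have "at x within {0..} = at x"
    by (rule at_within_interior) (use x interior_real_atLeast in auto)
  then show "\<exists>y. (f has_real_derivative y) (at x) \<and> y \<le> 0"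
    using d[of x] nonpos[of x] x by auto
next
  have "continuous_on {0..} f"
    unfolding continuous_on_eq_continuous_within
    using d DERIV_continuous by blast
  then show "continuous_on {0..t} f"
    by (rule continuous_on_subset) auto
qed

theorem mainTheorem4:
  fixes n :: nat and vol :: "nat \<Rightarrow> real" and face :: "nat \<Rightarrow> nat \<Rightarrow> real"
    and y :: "nat \<Rightarrow> 'a::euclidean_space" and bn :: "nat \<Rightarrow> nat \<Rightarrow> real"
    and D CP :: real and pst :: "nat \<Rightarrow> real" and rho :: "real \<Rightarrow> nat \<Rightarrow> real"
  assumes vol_pos: "\<forall>i<n. 0 < vol i"
    and face_nonneg: "\<forall>i<n. \<forall>j<n. 0 \<le> face i j"
    and face_sym: "\<forall>i<n. \<forall>j<n. face i j = face j i"
    and face_diag: "\<forall>i<n. face i i = 0"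
    and y_distinct: "inj_on y {..<n}"
    and bn_anti: "\<forall>i<n. \<forall>j<n. bn j i = - bn i j"
    and connected: "\<forall>i<n. \<forall>j<n. (i, j) \<in> {(a, b). a < n \<and> b \<in> VF n face a}\<^sup>*"
    and D_pos: "0 < D"
    and pi_pos: "\<forall>i<n. 0 < pst i"
    and steady: "numerical_steady_state n vol face y bn D pst"
    and CP_pos: "0 < CP"
    and poincare: "\<forall>u :: nat \<Rightarrow> real. (\<Sum>i<n. u i * pst i * vol i) = 0 \<longrightarrow>
        (\<Sum>i<n. (u i)\<^sup>2 * pst i * vol i)
          \<le> CP * (\<Sum>i<n. \<Sum>j<n. face i j * (pst i + pst j) / norm (y i - y j) * (u i - u j)\<^sup>2)"
    and ode: "\<forall>t\<ge>0. \<forall>i<n. ((\<lambda>s. rho s i * vol i) has_real_derivative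
                 upwind_rhs n vol face y bn D (rho t) i) (at t within {0..})"
    and mass: "(\<Sum>i<n. rho 0 i * vol i) = (\<Sum>i<n. pst i * vol i)"
  shows "\<forall>t\<ge>0. (\<Sum>i<n. (rho t i - pst i)\<^sup>2 / pst i * vol i)
           \<le> exp (- (D / (2 * CP)) * t) * (\<Sum>i<n. (rho 0 i - pst i)\<^sup>2 / pst i * vol i)"
proof -
  let ?VF = "VF n face"
  have VF_sub: "?VF i \<subseteq> {..<n}" for i by (auto simp: VF_def)
  have VFsym: "j \<in> ?VF i \<longleftrightarrow> i \<in> ?VF j" if "i < n" "j < n" for i j
    using that face_sym by (auto simp: VF_def)
  have VFirr: "i \<notin> ?VF i" for i by (simp add: VF_def)
  define c where "c i j = (if j \<in> ?VF i then face i j * (D / norm (y j - y i) + pospart (bn i j)) else 0)" for i j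
  have c_ii: "c i i = 0" for i by (simp add: c_def VF_def)
  have c_lb: "c i j \<ge> face i j * (D / norm (y i - y j))" if "i < n" "j < n" for i j
  proof (cases "j \<in> ?VF i")
    case True
    have "0 \<le> face i j" using True by (auto simp: VF_def)
    moreover have "0 \<le> pospart (bn i j)" by (simp add: pospart_def)
    moreover have "norm (y i - y j) = norm (y j - y i)" by (rule norm_minus_commute)
    ultimately show ?thesis using True by (simp add: c_def distrib_left)
  next
    case False
    have "face i j = 0" using False that face_nonneg face_diag by (force simp: VF_def)
    then show ?thesis using False by (simp add: c_def)
  qed
  have rhs: "upwind_rhs n vol face y bn D r i = (\<Sum>j<n. c j i * r j - c i j * r i)" if i: "i < n" for r i
  proof -
    let ?g = "\<lambda>j. face i j * (D * (r j - r i) / norm (y j - y i)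
        + negpart (bn i j) * r j - pospart (bn i j) * r i)"
    have "(\<Sum>j<n. c j i * r j - c i j * r i) = (\<Sum>j<n. if j \<in> ?VF i then ?g j else 0)"
    proof (rule sum.cong[OF refl])
      fix j assume j: "j \<in> {..<n}"
      show "c j i * r j - c i j * r i = (if j \<in> ?VF i then ?g j else 0)"
      proof (cases "j \<in> ?VF i")
        case True
        then have iv: "i \<in> ?VF j" using VFsym[OF i] j by blast
        have "bn j i = - bn i j" using bn_anti i j by blast
        then have pn: "pospart (bn j i) = negpart (bn i j)" by (simp add: pospart_def negpart_def)
        have "face j i = face i j" using face_sym i j by (simp only: lessThan_iff)
        moreover have "norm (y i - y j) = norm (y j - y i)" by (rule norm_minus_commute)
        ultimately show ?thesis using True iv pn
          by (simp add: c_def algebra_simps diff_divide_distrib)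
      next
        case False
        then have "i \<notin> ?VF j" using VFsym[OF i] j by blast
        then show ?thesis using False by (simp add: c_def)
      qed
    qed
    also have "\<dots> = sum ?g ({..<n} \<inter> ?VF i)" by (rule sum.inter_restrict[symmetric]) simp
    also have "{..<n} \<inter> ?VF i = ?VF i" using VF_sub by auto
    finally show ?thesis by (simp add: upwind_rhs_def)
  qed
  have stat: "(\<Sum>j<n. c j i * pst j - c i j * pst i) = 0" if i: "i < n" for i
  proof -
    have q: "Qrate n vol face y bn D j i * pst j * vol j
        = c j i * pst j - (if j = i then (\<Sum>k<n. c i k) * pst i else 0)" if j: "j < n" for j
    proof (cases "j = i")
      case True
      have "(\<Sum>k<n. c i k) = (\<Sum>k<n. if k \<in> ?VF i then face i k * (D / norm (y k - y i) + pospart (bn i k)) else 0)"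
        by (simp add: c_def)
      also have "\<dots> = (\<Sum>k\<in>{..<n} \<inter> ?VF i. face i k * (D / norm (y k - y i) + pospart (bn i k)))"
        by (rule sum.inter_restrict[symmetric]) simp
      also have "{..<n} \<inter> ?VF i = ?VF i" using VF_sub by auto
      finally have s: "(\<Sum>k<n. c i k) = (\<Sum>k\<in>?VF i. face i k * (D / norm (y k - y i) + pospart (bn i k)))" .
      have "vol i > 0" using vol_pos i by auto
      then show ?thesis using True VFirr[of i] s c_ii[of i]
        by (simp add: Qrate_def sum_divide_distrib[symmetric])
    next
      case False
      have "vol j > 0" using vol_pos j by auto
      then show ?thesis using False by (simp add: Qrate_def c_def)
    qed
    have "0 = (\<Sum>j<n. Qrate n vol face y bn D j i * pst j * vol j)"
      using steady i by (simp add: numerical_steady_state_def)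
    also have "\<dots> = (\<Sum>j<n. c j i * pst j - (if j = i then (\<Sum>k<n. c i k) * pst i else 0))"
      using q by simp
    also have "\<dots> = (\<Sum>j<n. c j i * pst j) - (\<Sum>k<n. c i k) * pst i"
      using i by (simp add: sum_subtractf)
    also have "\<dots> = (\<Sum>j<n. c j i * pst j - c i j * pst i)"
      by (simp add: sum_subtractf sum_distrib_right)
    finally show ?thesis by simp
  qed
  have mass_t: "(\<Sum>i<n. rho t i * vol i) = (\<Sum>i<n. pst i * vol i)" if t: "t \<ge> 0" for t
  proof -
    let ?M = "\<lambda>s. \<Sum>i<n. rho s i * vol i"
    have dM: "(?M has_real_derivative 0) (at s within {0..})" if s: "s \<ge> 0" for s
    proof -
      have "(?M has_real_derivative (\<Sum>i<n. upwind_rhs n vol face y bn D (rho s) i)) (at s within {0..})"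
        using ode s by (intro DERIV_sum) auto
      moreover have "(\<Sum>i<n. upwind_rhs n vol face y bn D (rho s) i) = 0"
      proof -
        have "(\<Sum>i<n. upwind_rhs n vol face y bn D (rho s) i) = (\<Sum>i<n. \<Sum>j<n. c j i * rho s j - c i j * rho s i)"
          using rhs by simp
        also have "\<dots> = (\<Sum>i<n. \<Sum>j<n. c j i * rho s j) - (\<Sum>i<n. \<Sum>j<n. c i j * rho s i)"
          by (simp add: sum_subtractf)
        also have "(\<Sum>i<n. \<Sum>j<n. c j i * rho s j) = (\<Sum>i<n. \<Sum>j<n. c i j * rho s i)"
          by (rule sum.swap)
        finally show ?thesis by simp
      qed
      ultimately show ?thesis by simp
    qed
    have "?M t \<le> ?M 0" using decr_lemma[of ?M "\<lambda>_. 0" t] dM t by simp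
    moreover have "- ?M t \<le> - ?M 0"
    proof -
      have "((\<lambda>s. - ?M s) has_real_derivative 0) (at s within {0..})" if "s \<ge> 0" for s
        using DERIV_minus[OF dM[OF that]] by simp
      then show ?thesis using decr_lemma[of "\<lambda>s. - ?M s" "\<lambda>_. 0" t] t by simp
    qed
    ultimately show ?thesis using mass by linarith
  qed
  define k where "k = D / (2 * CP)"
  have k_pos: "k > 0" using D_pos CP_pos by (simp add: k_def)
  define E where "E t = (\<Sum>i<n. (rho t i - pst i)\<^sup>2 / pst i * vol i)" for t
  define E' where "E' t = (\<Sum>i<n. 2 * ((rho t i - pst i) / pst i) * upwind_rhs n vol face y bn D (rho t) i)" for t
  have dE: "(E has_real_derivative E' t) (at t within {0..})" if t: "t \<ge> 0" for t
  proof -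
    have di: "((\<lambda>s. (rho s i - pst i)\<^sup>2 / pst i * vol i) has_real_derivative
        2 * ((rho t i - pst i) / pst i) * upwind_rhs n vol face y bn D (rho t) i) (at t within {0..})"
      if i: "i \<in> {..<n}" for i
    proof -
      have vp: "vol i > 0" "pst i > 0" using vol_pos pi_pos i by auto
      have d0: "((\<lambda>s. rho s i * vol i) has_real_derivative upwind_rhs n vol face y bn D (rho t) i) (at t within {0..})"
        using ode t i by auto
      let ?R = "upwind_rhs n vol face y bn D (rho t) i"
      let ?f = "\<lambda>s. rho s i * vol i - pst i * vol i"
      have d0': "(?f has_real_derivative ?R) (at t within {0..})"
        using DERIV_diff[OF d0 DERIV_const[of "pst i * vol i"]] by simp
      have d1: "((\<lambda>s. ?f s * ?f s / (pst i * vol i)) has_real_derivative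
          (?R * ?f t + ?R * ?f t) / (pst i * vol i)) (at t within {0..})"
        by (rule DERIV_cdivide[OF DERIV_mult[OF d0' d0']])
      have fe: "(\<lambda>s. ?f s * ?f s / (pst i * vol i)) = (\<lambda>s. (rho s i - pst i)\<^sup>2 / pst i * vol i)"
        using vp by (intro ext) (simp add: field_simps power2_eq_square)
      have ve: "(?R * ?f t + ?R * ?f t) / (pst i * vol i)
          = 2 * ((rho t i - pst i) / pst i) * upwind_rhs n vol face y bn D (rho t) i"
        using vp by (simp add: field_simps)
      show ?thesis using d1 unfolding fe ve .
    qed
    have "((\<lambda>s. \<Sum>i<n. (rho s i - pst i)\<^sup>2 / pst i * vol i) has_real_derivative
        (\<Sum>i<n. 2 * ((rho t i - pst i) / pst i) * upwind_rhs n vol face y bn D (rho t) i)) (at t within {0..})"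
      by (rule DERIV_sum) (rule di)
    then show ?thesis unfolding E_def[abs_def] E'_def .
  qed
  have key: "E' t \<le> - k * E t" if t: "t \<ge> 0" for t
  proof -
    define v where "v i = (rho t i - pst i) / pst i" for i
    have rho_eq: "rho t j = pst j * v j + pst j" if "j < n" for j
    proof -
      have "pst j > 0" using pi_pos that by auto
      then show ?thesis by (simp add: v_def field_simps)
    qed
    have R_eq: "upwind_rhs n vol face y bn D (rho t) i = (\<Sum>j<n. c j i * pst j * v j - c i j * pst i * v i)"
      if i: "i < n" for i
    proof -
      have "upwind_rhs n vol face y bn D (rho t) i = (\<Sum>j<n. c j i * rho t j - c i j * rho t i)"
        using rhs[OF i] .
      also have "\<dots> = (\<Sum>j<n. (c j i * pst j * v j - c i j * pst i * v i) + (c j i * pst j - c i j * pst i))"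
        using rho_eq i by (intro sum.cong) (simp_all add: algebra_simps)
      also have "\<dots> = (\<Sum>j<n. c j i * pst j * v j - c i j * pst i * v i) + (\<Sum>j<n. c j i * pst j - c i j * pst i)"
        by (rule sum.distrib)
      finally show ?thesis using stat[OF i] by simp
    qed
    have E'_eq: "E' t = 2 * (\<Sum>i<n. v i * (\<Sum>j<n. c j i * pst j * v j - c i j * pst i * v i))"
    proof -
      have "E' t = (\<Sum>i<n. 2 * (v i * upwind_rhs n vol face y bn D (rho t) i))"
        unfolding E'_def v_def by (simp only: mult.assoc)
      also have "\<dots> = (\<Sum>i<n. 2 * (v i * (\<Sum>j<n. c j i * pst j * v j - c i j * pst i * v i)))"
        using R_eq by (intro sum.cong) simp_all
      finally show ?thesis by (simp add: sum_distrib_left)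
    qed
    also have "\<dots> = - (\<Sum>i<n. \<Sum>j<n. c i j * pst i * (v i - v j)\<^sup>2)"
      by (rule markov_identity) (rule stat)
    finally have E'_eq2: "E' t = - (\<Sum>i<n. \<Sum>j<n. c i j * pst i * (v i - v j)\<^sup>2)" .
    define S1 where "S1 = (\<Sum>i<n. \<Sum>j<n. face i j * (D / norm (y i - y j)) * pst i * (v i - v j)\<^sup>2)"
    define S2 where "S2 = (\<Sum>i<n. \<Sum>j<n. face i j * (D / norm (y i - y j)) * pst j * (v i - v j)\<^sup>2)"
    define P where "P = (\<Sum>i<n. \<Sum>j<n. face i j * (pst i + pst j) / norm (y i - y j) * (v i - v j)\<^sup>2)"
    have lb: "S1 \<le> (\<Sum>i<n. \<Sum>j<n. c i j * pst i * (v i - v j)\<^sup>2)"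
      unfolding S1_def
    proof (intro sum_mono)
      fix i j assume i: "i \<in> {..<n}" and j: "j \<in> {..<n}"
      have "0 < pst i" using pi_pos i by simp
      then have "0 \<le> pst i * (v i - v j)\<^sup>2" by simp
      then show "face i j * (D / norm (y i - y j)) * pst i * (v i - v j)\<^sup>2 \<le> c i j * pst i * (v i - v j)\<^sup>2"
        using mult_right_mono[OF c_lb[of i j]] i j by (simp add: mult.assoc)
    qed
    have S12: "S2 = S1"
    proof -
      have "S2 = (\<Sum>j<n. \<Sum>i<n. face i j * (D / norm (y i - y j)) * pst j * (v i - v j)\<^sup>2)"
        unfolding S2_def by (rule sum.swap)
      also have "\<dots> = S1" unfolding S1_def
      proof (intro sum.cong refl)
        fix i j assume i: "i \<in> {..<n}" and j: "j \<in> {..<n}"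
        have "face j i = face i j" using face_sym i j by (simp only: lessThan_iff)
        moreover have "norm (y j - y i) = norm (y i - y j)" by (rule norm_minus_commute)
        moreover have "(v j - v i)\<^sup>2 = (v i - v j)\<^sup>2" by (simp add: power2_commute)
        ultimately show "face j i * (D / norm (y j - y i)) * pst i * (v j - v i)\<^sup>2
            = face i j * (D / norm (y i - y j)) * pst i * (v i - v j)\<^sup>2" by simp
      qed
      finally show ?thesis .
    qed
    have SP: "S1 + S2 = D * P"
      unfolding S1_def S2_def P_def
      by (simp add: sum.distrib[symmetric] sum_distrib_left algebra_simps add_divide_distrib)
    have mass0: "(\<Sum>i<n. v i * pst i * vol i) = 0"
    proof -
      have "(\<Sum>i<n. v i * pst i * vol i) = (\<Sum>i<n. rho t i * vol i - pst i * vol i)"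
      proof (intro sum.cong refl)
        fix i assume "i \<in> {..<n}"
        then have "pst i > 0" using pi_pos by auto
        then show "v i * pst i * vol i = rho t i * vol i - pst i * vol i"
          by (simp add: v_def field_simps)
      qed
      also have "\<dots> = 0" using mass_t[OF t] by (simp add: sum_subtractf)
      finally show ?thesis .
    qed
    have Pc: "(\<Sum>i<n. (v i)\<^sup>2 * pst i * vol i) \<le> CP * P"
      using poincare mass0 unfolding P_def by blast
    have Ev: "E t = (\<Sum>i<n. (v i)\<^sup>2 * pst i * vol i)"
      unfolding E_def
    proof (intro sum.cong refl)
      fix i assume "i \<in> {..<n}"
      then have "pst i > 0" using pi_pos by auto
      then show "(rho t i - pst i)\<^sup>2 / pst i * vol i = (v i)\<^sup>2 * pst i * vol i"
        by (simp add: v_def power2_eq_square field_simps)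
    qed
    have "E t \<le> CP * P" using Pc Ev by simp
    then have "k * E t \<le> k * (CP * P)" using k_pos by (simp add: mult_left_mono)
    also have "k * (CP * P) = D / 2 * P" using CP_pos by (simp add: k_def)
    also have "\<dots> = S1" using SP S12 by simp
    finally show ?thesis using E'_eq2 lb by linarith
  qed
  define G where "G s = exp (k * s) * E s" for s
  have G0: "\<And>t. t \<ge> 0 \<Longrightarrow> G t \<le> G 0"
  proof -
    fix t :: real assume t: "t \<ge> 0"
    have dG: "(G has_real_derivative exp (k * s) * (k * E s + E' s)) (at s within {0..})" if s: "s \<ge> 0" for s
    proof -
      have "((\<lambda>s. exp (k * s) * E s) has_real_derivative exp (k * s) * k * E s + exp (k * s) * E' s) (at s within {0..})"
        by (rule derivative_eq_intros dE[OF s] refl | simp)+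
      then show ?thesis unfolding G_def[abs_def] by (simp add: algebra_simps)
    qed
    have np: "exp (k * s) * (k * E s + E' s) \<le> 0" if "s \<ge> 0" for s
      using key[OF that] by (simp add: mult_nonneg_nonpos)
    show "G t \<le> G 0" using decr_lemma[of G "\<lambda>s. exp (k * s) * (k * E s + E' s)" t] dG np t by blast
  qed
  show ?thesis
  proof (intro allI impI)
    fix t :: real assume t: "t \<ge> 0"
    have A: "exp (k * t) * E t \<le> E 0" using G0[OF t] by (simp add: G_def)
    have B: "exp (- k * t) * (exp (k * t) * E t) \<le> exp (- k * t) * E 0"
      by (rule mult_left_mono[OF A]) simp
    have C: "exp (- k * t) * (exp (k * t) * E t) = E t"
    proof -
      have "exp (- k * t) * exp (k * t) = 1"
        using exp_minus_inverse[of "k * t"] by (simp add: mult.commute)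
      then show ?thesis by (metis mult.assoc mult_1)
    qed
    have "E t \<le> exp (- k * t) * E 0" using B unfolding C .
    then show "(\<Sum>i<n. (rho t i - pst i)\<^sup>2 / pst i * vol i)
           \<le> exp (- (D / (2 * CP)) * t) * (\<Sum>i<n. (rho 0 i - pst i)\<^sup>2 / pst i * vol i)"
      unfolding E_def k_def .
  qed
qed

end
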